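(* Let $f\in\Gamma_0(X)$ and $x\in\operatorname{dom}f$. Then for every $\varepsilon\ge0$, \[ \partial_\varepsilon f^+(x)=\bigcup_{0\le\lambda\le1}\partial_{\varepsilon+\lambda f(x)-f^+(x)}(\lambda f)(x), \] where $f^+:=\max\{f,0\}$, $(\lambda f)(z):=\lambda f(z)$ for $\lambda>0$, and $0f:=\mathrm{I}_{\operatorname{dom}f}$.
   Context: $X$ is a real separated locally convex space with dual $X^*$ (weak$^*$ topology). $\Gamma_0(X)$ is the set of proper convex lsc functions $X\to\mathbb{R}\cup\{+\infty\}$; $\operatorname{dom}f=\{x: f(x)<+\infty\}$. $\mathrm{I}_A$ is the indicator function of $A$ ($0$ on $A$, $+\infty$ outside). For $g:X\to\overline{\mathbb{R}}$, $\partial_\delta g(x)=\{x^*\in X^*:\ g(y)\ge g(x)+\langle x^*,y-x\rangle-\delta\ \forall y\}$ if $g(x)\in\mathbb{R}$ and $\delta\ge0$, and $\partial_\delta g(x)=\emptyset$ if $g(x)\notin\mathbb{R}$ or $\delta<0$. *)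

theory Defs
  imports "HOL-Analysis.Analysis"
begin

definition locally_convex_space :: "'a::real_vector topology \<Rightarrow> bool" where
  "locally_convex_space T \<longleftrightarrow>
     topspace T = UNIV \<and>
     Hausdorff_space T \<and>
     continuous_map (prod_topology T T) T (\<lambda>(x, y). x + y) \<and>
     continuous_map (prod_topology euclideanreal T) T (\<lambda>(a, x). a *\<^sub>R x) \<and>
     (\<forall>U. openin T U \<and> 0 \<in> U \<longrightarrow> (\<exists>V. openin T V \<and> convex V \<and> 0 \<in> V \<and> V \<subseteq> U))"

definition dual_space :: "'a::real_vector topology \<Rightarrow> ('a \<Rightarrow> real) set" where
  "dual_space T = {l. linear l \<and> continuous_map T euclideanreal l}"

definition dom_fun :: "('a \<Rightarrow> ereal) \<Rightarrow> 'a set" where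
  "dom_fun f = {x. f x < \<infinity>}"

definition proper_fun :: "('a \<Rightarrow> ereal) \<Rightarrow> bool" where
  "proper_fun f \<longleftrightarrow> (\<forall>x. f x \<noteq> -\<infinity>) \<and> dom_fun f \<noteq> {}"

definition convex_fun :: "('a::real_vector \<Rightarrow> ereal) \<Rightarrow> bool" where
  "convex_fun f \<longleftrightarrow> convex {(x, r::real). f x \<le> ereal r}"

definition lsc_fun :: "'a topology \<Rightarrow> ('a \<Rightarrow> ereal) \<Rightarrow> bool" where
  "lsc_fun T f \<longleftrightarrow> (\<forall>c::real. closedin T {x. f x \<le> ereal c})"

definition Gamma0 :: "'a::real_vector topology \<Rightarrow> ('a \<Rightarrow> ereal) set" where
  "Gamma0 T = {f. proper_fun f \<and> convex_fun f \<and> lsc_fun T f}"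

definition ind_fun :: "'a set \<Rightarrow> 'a \<Rightarrow> ereal" where
  "ind_fun A x = (if x \<in> A then 0 else \<infinity>)"

definition fplus :: "('a \<Rightarrow> ereal) \<Rightarrow> 'a \<Rightarrow> ereal" where
  "fplus f x = max (f x) 0"

definition scale_fun :: "real \<Rightarrow> ('a \<Rightarrow> ereal) \<Rightarrow> 'a \<Rightarrow> ereal" where
  "scale_fun lam f = (if lam = 0 then ind_fun (dom_fun f) else (\<lambda>z. ereal lam * f z))"

definition eps_subdiff :: "'a::real_vector topology \<Rightarrow> ('a \<Rightarrow> ereal) \<Rightarrow> real \<Rightarrow> 'a \<Rightarrow> ('a \<Rightarrow> real) set" where
  "eps_subdiff T g d x =
     (if \<bar>g x\<bar> \<noteq> \<infinity> \<and> d \<ge> 0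
      then {l \<in> dual_space T. \<forall>y. g y \<ge> g x + ereal (l (y - x) - d)}
      else {})"

end

theory Submission imports Defs begin

lemma core_key:
  fixes F g :: "'a::real_vector \<Rightarrow> real"
  assumes cvx: "\<And>a b t. a\<in>D \<Longrightarrow> b\<in>D \<Longrightarrow> 0\<le>t \<Longrightarrow> t\<le>1 \<Longrightarrow>
      (1-t)*\<^sub>R a + t*\<^sub>R b \<in> D \<and> F ((1-t)*\<^sub>R a + t*\<^sub>R b) \<le> (1-t)*F a + t*F b"
  and aff: "\<And>a b t. g ((1-t)*\<^sub>R a + t*\<^sub>R b) = (1-t)*g a + t*g b"
  and H: "\<And>y. y\<in>D \<Longrightarrow> max (F y) 0 + g y \<ge> c"
  and y0: "y0 \<in> D" "g y0 < c" and y1: "y1 \<in> D" "F y1 + g y1 < c"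
  and mu: "0 \<le> mu" "mu * F y0 + g y0 < c" "mu * F y1 + g y1 < c"
  shows False
proof -
  have F0: "F y0 > 0" using H[OF y0(1)] y0(2) by (auto simp: max_def split: if_splits)
  have F1: "F y1 < 0" using H[OF y1(1)] y1(2) by (auto simp: max_def split: if_splits)
  define t where "t = F y0 / (F y0 - F y1)"
  have t0: "0 \<le> t" "t \<le> 1" using F0 F1 by (auto simp: t_def field_simps)
  have tF: "(1-t)*F y0 + t*F y1 = 0" using F0 F1 by (simp add: t_def field_simps)
  define z where "z = (1-t)*\<^sub>R y0 + t*\<^sub>R y1"
  have zD: "z \<in> D" and Fz: "F z \<le> 0" using cvx[OF y0(1) y1(1) t0] tF by (auto simp: z_def)
  have gz: "g z = (1-t)*g y0 + t*g y1" by (simp add: z_def aff)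
  have "(1-t)*(mu * F y0 + g y0) + t*(mu * F y1 + g y1) < c"
  proof (cases "t = 1")
    case True then show ?thesis using mu by simp
  next
    case False
    then have "1 - t > 0" using t0 by simp
    then have "(1-t)*(mu * F y0 + g y0) < (1-t)*c" using mu by simp
    moreover have "t*(mu * F y1 + g y1) \<le> t*c" using mu t0 by (simp add: mult_left_mono)
    ultimately show ?thesis by (simp add: algebra_simps)
  qed
  also have "(1-t)*(mu * F y0 + g y0) + t*(mu * F y1 + g y1) = mu*((1-t)*F y0 + t*F y1) + g z"
    by (simp add: gz algebra_simps)
  finally have "g z < c" using tF by simp
  moreover have "max (F z) 0 = 0" using Fz by simp
  ultimately show False using H[OF zD] by simp
qed

lemma core:
  fixes F g :: "'a::real_vector \<Rightarrow> real"
  assumes cvx: "\<And>a b t. a\<in>D \<Longrightarrow> b\<in>D \<Longrightarrow> 0\<le>t \<Longrightarrow> t\<le>1 \<Longrightarrow>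
      (1-t)*\<^sub>R a + t*\<^sub>R b \<in> D \<and> F ((1-t)*\<^sub>R a + t*\<^sub>R b) \<le> (1-t)*F a + t*F b"
  and aff: "\<And>a b t. g ((1-t)*\<^sub>R a + t*\<^sub>R b) = (1-t)*g a + t*g b"
  and H: "\<And>y. y\<in>D \<Longrightarrow> max (F y) 0 + g y \<ge> c"
  shows "\<exists>lam\<in>{0..1}. \<forall>y\<in>D. lam * F y + g y \<ge> c"
proof (cases "{y\<in>D. g y < c} = {}")
  case True
  then show ?thesis by (intro bexI[of _ 0]) (auto simp: not_less)
next
  case False
  define S0 where "S0 = {y\<in>D. g y < c}"
  define a where "a y = (c - g y) / F y" for y
  have Fpos: "F y > 0" if "y \<in> S0" for y
    using H[of y] that by (auto simp: S0_def max_def split: if_splits)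
  have a01: "0 < a y \<and> a y \<le> 1" if "y \<in> S0" for y
  proof -
    have "F y \<ge> c - g y" using H[of y] Fpos[OF that] that by (auto simp: S0_def)
    then show ?thesis using Fpos[OF that] that by (auto simp: a_def S0_def field_simps)
  qed
  have ne: "S0 \<noteq> {}" using False by (simp add: S0_def)
  have bdd: "bdd_above (a ` S0)" using a01 by (intro bdd_aboveI2[of _ _ 1]) auto
  define lam where "lam = (SUP y\<in>S0. a y)"
  have up: "a y \<le> lam" if "y \<in> S0" for y using cSUP_upper[OF that bdd] by (simp add: lam_def)
  have l1: "lam \<le> 1" unfolding lam_def using ne a01 by (intro cSUP_least) auto
  have l0: "0 \<le> lam" using ne up a01 by (meson all_not_in_conv less_imp_le order_trans)
  show ?thesis
  proof (intro bexI[of _ lam] ballI)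
    fix y assume yD: "y \<in> D"
    show "lam * F y + g y \<ge> c"
    proof (cases "y \<in> S0")
      case True
      have "a y * F y \<le> lam * F y" using up[OF True] Fpos[OF True] by (simp add: mult_right_mono)
      moreover have "a y * F y = c - g y" using Fpos[OF True] by (simp add: a_def)
      ultimately show ?thesis by simp
    next
      case notS0: False
      then have gy: "g y \<ge> c" using yD by (auto simp: S0_def)
      show ?thesis
      proof (cases "F y \<ge> 0")
        case True then show ?thesis using gy l0 by (smt (verit) mult_nonneg_nonneg)
      next
        case Fneg: False
        define b where "b = (g y - c) / (- F y)"
        have ab: "a y0 \<le> b" if y0: "y0 \<in> S0" for y0
        proof (rule ccontr)
          assume "\<not> a y0 \<le> b"
          then have lt: "b < a y0" by simp
          define mu where "mu = (a y0 + b) / 2"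
          have b0: "b \<ge> 0" using gy Fneg by (simp add: b_def divide_nonneg_neg)
          have "mu < a y0" "b < mu" using lt by (auto simp: mu_def)
          have F0: "F y0 > 0" using Fpos[OF y0] .
          have m1: "mu * F y0 + g y0 < c"
            using \<open>mu < a y0\<close> F0 by (simp add: a_def field_simps)
          have m2: "mu * F y + g y < c"
            using \<open>b < mu\<close> Fneg by (simp add: b_def field_simps)
          have "b < 1" using lt a01[OF y0] by simp
          then have m3: "F y + g y < c" using Fneg by (simp add: b_def field_simps)
          show False
            by (rule core_key[OF cvx aff H, of y0 y mu])
               (use y0 yD m1 m2 m3 b0 \<open>b < mu\<close> in \<open>auto simp: S0_def\<close>)
        qed
        have "lam \<le> b" unfolding lam_def using ne ab by (intro cSUP_least) auto
        then have "lam * (- F y) \<le> b * (- F y)" using Fneg by (simp add: mult_right_mono)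
        then show ?thesis using Fneg by (simp add: b_def)
      qed
    qed
  next
    show "lam \<in> {0..1}" using l0 l1 by simp
  qed
qed

theorem lemma4:
  fixes T :: "'a::real_vector topology" and f :: "'a \<Rightarrow> ereal" and x :: 'a and \<epsilon> :: real
  assumes "locally_convex_space T"
    and "f \<in> Gamma0 T"
    and "x \<in> dom_fun f"
    and "\<epsilon> \<ge> 0"
  shows "eps_subdiff T (fplus f) \<epsilon> x =
    (\<Union>lam\<in>{0..1}. eps_subdiff T (scale_fun lam f)
        (\<epsilon> + lam * real_of_ereal (f x) - real_of_ereal (fplus f x)) x)"
proof -
  define D where "D = dom_fun f"
  define F where "F y = real_of_ereal (f y)" for y
  have nm: "f y \<noteq> -\<infinity>" for y using assms(2) by (auto simp: Gamma0_def proper_fun_def)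
  have xD: "x \<in> D" using assms(3) by (simp add: D_def)
  have fD: "y \<in> D \<Longrightarrow> f y = ereal (F y)" for y using nm[of y]
    by (cases "f y") (auto simp: D_def dom_fun_def F_def)
  have fnD: "y \<notin> D \<Longrightarrow> f y = \<infinity>" for y by (auto simp: D_def dom_fun_def)
  define Fp where "Fp y = max (F y) 0" for y
  have fpD: "y \<in> D \<Longrightarrow> fplus f y = ereal (Fp y)" for y
    by (simp add: fplus_def fD Fp_def max_def)
  have fpnD: "y \<notin> D \<Longrightarrow> fplus f y = \<infinity>" for y by (simp add: fplus_def fnD)
  have sD: "y \<in> D \<Longrightarrow> 0 \<le> lam \<Longrightarrow> scale_fun lam f y = ereal (lam * F y)" for y lam
    by (auto simp: scale_fun_def ind_fun_def D_def[symmetric] fD)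
  have snD: "y \<notin> D \<Longrightarrow> 0 \<le> lam \<Longrightarrow> scale_fun lam f y = \<infinity>" for y lam
    by (auto simp: scale_fun_def ind_fun_def D_def[symmetric] fnD)
  have cvx: "(1-t)*\<^sub>R a + t*\<^sub>R b \<in> D \<and> F ((1-t)*\<^sub>R a + t*\<^sub>R b) \<le> (1-t)*F a + t*F b"
    if "a\<in>D" "b\<in>D" "0\<le>t" "t\<le>1" for a b t
  proof -
    have C: "convex {(x, r::real). f x \<le> ereal r}" using assms(2) by (simp add: Gamma0_def convex_fun_def)
    have "(a, F a) \<in> {(x, r::real). f x \<le> ereal r}" "(b, F b) \<in> {(x, r::real). f x \<le> ereal r}"
      using that fD by auto
    from convexD_alt[OF C this(1) this(2), of t] that
    have "f ((1-t)*\<^sub>R a + t*\<^sub>R b) \<le> ereal ((1-t)*F a + t*F b)" by simp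
    moreover then have "(1-t)*\<^sub>R a + t*\<^sub>R b \<in> D" by (auto simp: D_def dom_fun_def)
    ultimately show ?thesis using fD by auto
  qed
  have lin: "linear l" if "l \<in> dual_space T" for l using that by (simp add: dual_space_def)
  let ?fx = "real_of_ereal (f x)" and ?fpx = "real_of_ereal (fplus f x)"
  have fx: "?fx = F x" by (simp add: F_def)
  have fpx: "?fpx = Fp x" using fpD[OF xD] by simp
  have fpfin: "\<bar>fplus f x\<bar> \<noteq> \<infinity>" using fpD[OF xD] by simp
  have sfin: "\<bar>scale_fun lam f x\<bar> \<noteq> \<infinity>" if "0 \<le> lam" for lam using sD[OF xD that] by simp
  have LHS: "l \<in> eps_subdiff T (fplus f) \<epsilon> x \<longleftrightarrow> l \<in> dual_space T \<and>
       (\<forall>y\<in>D. Fp y \<ge> Fp x + l (y - x) - \<epsilon>)" for l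
  proof -
    have "(\<forall>y. fplus f y \<ge> fplus f x + ereal (l (y - x) - \<epsilon>)) \<longleftrightarrow>
          (\<forall>y\<in>D. Fp y \<ge> Fp x + l (y - x) - \<epsilon>)"
    proof (intro iffI ballI allI)
      fix y assume A: "\<forall>y. fplus f y \<ge> fplus f x + ereal (l (y - x) - \<epsilon>)" and y: "y \<in> D"
      show "Fp y \<ge> Fp x + l (y - x) - \<epsilon>" using A[rule_format, of y] fpD[OF y] fpD[OF xD] by simp
    next
      fix y assume A: "\<forall>y\<in>D. Fp y \<ge> Fp x + l (y - x) - \<epsilon>"
      show "fplus f y \<ge> fplus f x + ereal (l (y - x) - \<epsilon>)"
      proof (cases "y \<in> D")
        case True then show ?thesis using A[rule_format, OF True] fpD[OF True] fpD[OF xD] by (simp add: add_diff_eq)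
      qed (simp add: fpnD)
    qed
    then show ?thesis using fpfin assms(4) by (simp add: eps_subdiff_def)
  qed
  have RHS: "l \<in> eps_subdiff T (scale_fun lam f) d x \<longleftrightarrow> l \<in> dual_space T \<and> d \<ge> 0 \<and>
       (\<forall>y\<in>D. lam * F y \<ge> lam * F x + l (y - x) - d)" if lam0: "0 \<le> lam" for l lam d
  proof -
    have "(\<forall>y. scale_fun lam f y \<ge> scale_fun lam f x + ereal (l (y - x) - d)) \<longleftrightarrow>
          (\<forall>y\<in>D. lam * F y \<ge> lam * F x + l (y - x) - d)"
    proof (intro iffI ballI allI)
      fix y assume A: "\<forall>y. scale_fun lam f y \<ge> scale_fun lam f x + ereal (l (y - x) - d)" and y: "y \<in> D"
      show "lam * F y \<ge> lam * F x + l (y - x) - d" using A[rule_format, of y] sD[OF y lam0] sD[OF xD lam0] by simp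
    next
      fix y assume A: "\<forall>y\<in>D. lam * F y \<ge> lam * F x + l (y - x) - d"
      show "scale_fun lam f y \<ge> scale_fun lam f x + ereal (l (y - x) - d)"
      proof (cases "y \<in> D")
        case True then show ?thesis using A[rule_format, OF True] sD[OF True lam0] sD[OF xD lam0] by (simp add: add_diff_eq)
      qed (simp add: snD[OF _ lam0])
    qed
    then show ?thesis using sfin[OF that] by (auto simp: eps_subdiff_def)
  qed
  show ?thesis
  proof (intro set_eqI iffI)
    fix l assume "l \<in> eps_subdiff T (fplus f) \<epsilon> x"
    then have ld: "l \<in> dual_space T" and H: "\<And>y. y\<in>D \<Longrightarrow> Fp y \<ge> Fp x + l (y - x) - \<epsilon>"
      using LHS by auto
    have L: "linear l" using lin[OF ld] .
    define g where "g y = - l (y - x)" for y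
    have aff: "g ((1-t)*\<^sub>R a + t*\<^sub>R b) = (1-t)*g a + t*g b" for a b t
    proof -
      have "(1-t)*\<^sub>R a + t*\<^sub>R b - x = (1-t)*\<^sub>R (a - x) + t*\<^sub>R (b - x)"
        by (simp add: algebra_simps)
      then show ?thesis using L by (simp add: g_def linear_add linear_scale)
    qed
    obtain lam where lam: "lam \<in> {0..1}" and G: "\<And>y. y\<in>D \<Longrightarrow> lam * F y + g y \<ge> Fp x - \<epsilon>"
      using core[of D F g "Fp x - \<epsilon>", OF cvx aff] H by (force simp: g_def Fp_def)
    have l0: "l 0 = 0" using L by (simp add: linear_0)
    have "lam * F x \<ge> Fp x - \<epsilon>" using G[OF xD] l0 by (simp add: g_def)
    then have "l \<in> eps_subdiff T (scale_fun lam f) (\<epsilon> + lam * ?fx - ?fpx) x"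
      using lam G ld by (subst RHS) (auto simp: fx fpx g_def, smt (verit) G g_def)
    then show "l \<in> (\<Union>lam\<in>{0..1}. eps_subdiff T (scale_fun lam f) (\<epsilon> + lam * ?fx - ?fpx) x)"
      using lam by blast
  next
    fix l assume "l \<in> (\<Union>lam\<in>{0..1}. eps_subdiff T (scale_fun lam f) (\<epsilon> + lam * ?fx - ?fpx) x)"
    then obtain lam where lam: "lam \<in> {0..1}"
      and "l \<in> eps_subdiff T (scale_fun lam f) (\<epsilon> + lam * ?fx - ?fpx) x" by blast
    then have ld: "l \<in> dual_space T" and
      G: "\<And>y. y\<in>D \<Longrightarrow> lam * F y \<ge> lam * F x + l (y - x) - (\<epsilon> + lam * F x - Fp x)"
      using RHS[of lam] by (auto simp: fx fpx)
    have M: "Fp y \<ge> lam * F y" for y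
      using lam by (cases "F y \<ge> 0") (auto simp: Fp_def mult_left_le_one_le mult_nonneg_nonpos max_def)
    have "\<forall>y\<in>D. Fp y \<ge> Fp x + l (y - x) - \<epsilon>"
    proof
      fix y assume "y \<in> D"
      from G[OF this] M[of y] show "Fp y \<ge> Fp x + l (y - x) - \<epsilon>" by linarith
    qed
    then show "l \<in> eps_subdiff T (fplus f) \<epsilon> x"
      using LHS ld by blast
  qed
qed

end
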